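(* Let $\Gamma$ be a symmetric bimatrix game. The distribution of the players' actions in any fully symmetric indirect correlated equilibrium of $\Gamma$ is an exchangeable equilibrium of $\Gamma$, and every exchangeable equilibrium of $\Gamma$ arises as the distribution of actions of some fully symmetric indirect correlated equilibrium.
   Context: A symmetric bimatrix game: two players with common finite strategy set $C_1$ and utilities with $u_1(s_1,s_2)=u_2(s_2,s_1)$. A correlated equilibrium is a distribution $\pi$ on $C_1\times C_1$ with $\sum_{s_{-i}}[u_i(t_i,s_{-i})-u_i(s)]\pi(s)\le0$ for each player $i$ and all $s_i,t_i\in C_1$. An exchangeable equilibrium is a correlated equilibrium whose two coordinates are conditionally i.i.d., equivalently a correlated equilibrium of the form $\sum_{i=1}^k\lambda_ix_ix_i^T$ with $x_i$ probability vectors on $C_1$ and $\lambda$ a probability vector. A correlation scheme consists of a random state of the world, independent private noise signals for each player (independent of the state), for each player a map from (state, own noise) to his information, and for each player $i$ a function $f_i$ from his information to an action in $C_1$; these data are known to the players, only realizations are hidden. It is an indirect correlated equilibrium if no player can increase his expected utility by unilaterally replacing $f_i$ by another function of his information. It is fully symmetric if all players have the same noise distribution, the same map from state and noise to information, and the same map from information to action. *)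

theory Defs
  imports "HOL-Probability.Probability"
begin

text \<open>A bimatrix game with common finite strategy set (a finite type 'a), utilities
  u1 (player 1) and u2 (player 2), both indexed by the action profile (s1, s2).\<close>

definition symmetric_game :: "('a \<Rightarrow> 'a \<Rightarrow> real) \<Rightarrow> ('a \<Rightarrow> 'a \<Rightarrow> real) \<Rightarrow> bool" where
  "symmetric_game u1 u2 \<longleftrightarrow> (\<forall>s1 s2. u1 s1 s2 = u2 s2 s1)"

definition correlated_eq ::
  "('a::finite \<Rightarrow> 'a \<Rightarrow> real) \<Rightarrow> ('a \<Rightarrow> 'a \<Rightarrow> real) \<Rightarrow> ('a \<Rightarrow> 'a \<Rightarrow> real) \<Rightarrow> bool" where
  "correlated_eq u1 u2 \<pi> \<longleftrightarrow>
     (\<forall>s1 s2. 0 \<le> \<pi> s1 s2) \<and> (\<Sum>s1\<in>UNIV. \<Sum>s2\<in>UNIV. \<pi> s1 s2) = 1 \<and>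
     (\<forall>s t. (\<Sum>s2\<in>UNIV. (u1 t s2 - u1 s s2) * \<pi> s s2) \<le> 0) \<and>
     (\<forall>s t. (\<Sum>s1\<in>UNIV. (u2 s1 t - u2 s1 s) * \<pi> s1 s) \<le> 0)"

definition exchangeable_eq ::
  "('a::finite \<Rightarrow> 'a \<Rightarrow> real) \<Rightarrow> ('a \<Rightarrow> 'a \<Rightarrow> real) \<Rightarrow> ('a \<Rightarrow> 'a \<Rightarrow> real) \<Rightarrow> bool" where
  "exchangeable_eq u1 u2 \<pi> \<longleftrightarrow> correlated_eq u1 u2 \<pi> \<and>
     (\<exists>(k::nat) (w::nat \<Rightarrow> real) (x::nat \<Rightarrow> 'a \<Rightarrow> real).
        (\<forall>i<k. 0 \<le> w i) \<and> (\<Sum>i<k. w i) = 1 \<and>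
        (\<forall>i<k. (\<forall>a. 0 \<le> x i a) \<and> (\<Sum>a\<in>UNIV. x i a) = 1) \<and>
        (\<forall>a b. \<pi> a b = (\<Sum>i<k. w i * x i a * x i b)))"

text \<open>Fully symmetric correlation scheme for two players:
  state of the world w with distribution P; private noises n1, n2, i.i.d. with
  distribution Q, independent of the state (joint law P x Q x Q);
  common information map I : (state, own noise) -> information (measurable space S);
  common decision rule f : information -> action.\<close>

definition scheme_space :: "'w measure \<Rightarrow> 'n measure \<Rightarrow> ('w \<times> 'n \<times> 'n) measure" where
  "scheme_space P Q = P \<Otimes>\<^sub>M (Q \<Otimes>\<^sub>M Q)"

definition fs_scheme ::
  "'w measure \<Rightarrow> 'n measure \<Rightarrow> 'i measure \<Rightarrow> ('w \<times> 'n \<Rightarrow> 'i) \<Rightarrow> ('i \<Rightarrow> 'a) \<Rightarrow> bool" where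
  "fs_scheme P Q S I f \<longleftrightarrow> prob_space P \<and> prob_space Q \<and>
     I \<in> measurable (P \<Otimes>\<^sub>M Q) S \<and> f \<in> measurable S (count_space UNIV)"

definition fs_indirect_CE ::
  "('a::finite \<Rightarrow> 'a \<Rightarrow> real) \<Rightarrow> ('a \<Rightarrow> 'a \<Rightarrow> real) \<Rightarrow>
   'w measure \<Rightarrow> 'n measure \<Rightarrow> 'i measure \<Rightarrow> ('w \<times> 'n \<Rightarrow> 'i) \<Rightarrow> ('i \<Rightarrow> 'a) \<Rightarrow> bool" where
  "fs_indirect_CE u1 u2 P Q S I f \<longleftrightarrow> fs_scheme P Q S I f \<and>
     (\<forall>g \<in> measurable S (count_space UNIV).
        (\<integral>(w, n1, n2). u1 (g (I (w, n1))) (f (I (w, n2))) \<partial>scheme_space P Q)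
          \<le> (\<integral>(w, n1, n2). u1 (f (I (w, n1))) (f (I (w, n2))) \<partial>scheme_space P Q)
      \<and> (\<integral>(w, n1, n2). u2 (f (I (w, n1))) (g (I (w, n2))) \<partial>scheme_space P Q)
          \<le> (\<integral>(w, n1, n2). u2 (f (I (w, n1))) (f (I (w, n2))) \<partial>scheme_space P Q))"

definition action_dist ::
  "'w measure \<Rightarrow> 'n measure \<Rightarrow> ('w \<times> 'n \<Rightarrow> 'i) \<Rightarrow> ('i \<Rightarrow> 'a) \<Rightarrow> 'a \<Rightarrow> 'a \<Rightarrow> real" where
  "action_dist P Q I f a b =
     measure (scheme_space P Q)
       {(w, n1, n2) \<in> space (scheme_space P Q). f (I (w, n1)) = a \<and> f (I (w, n2)) = b}"

end

theory Submission
  imports Defs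
begin



lemma integral_actions:
  fixes A1 A2 :: "'x \<Rightarrow> 'a::finite" and c :: "'a \<Rightarrow> 'a \<Rightarrow> real"
  assumes fin: "finite_measure M"
    and [measurable]: "A1 \<in> measurable M (count_space UNIV)" "A2 \<in> measurable M (count_space UNIV)"
  shows "(\<integral>z. c (A1 z) (A2 z) \<partial>M) =
    (\<Sum>a\<in>UNIV. \<Sum>b\<in>UNIV. c a b * measure M {z\<in>space M. A1 z = a \<and> A2 z = b})"
proof -
  interpret finite_measure M by fact
  have S[measurable]: "\<And>a b. {z\<in>space M. A1 z = a \<and> A2 z = b} \<in> sets M" by measurable
  have "(\<integral>z. c (A1 z) (A2 z) \<partial>M) =
     (\<integral>z. (\<Sum>a\<in>UNIV. \<Sum>b\<in>UNIV. c a b * indicator {z\<in>space M. A1 z = a \<and> A2 z = b} z) \<partial>M)"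
  proof (rule Bochner_Integration.integral_cong)
    fix z assume z: "z \<in> space M"
    have "(\<Sum>a\<in>UNIV. \<Sum>b\<in>UNIV. c a b * indicator {z\<in>space M. A1 z = a \<and> A2 z = b} z)
       = (\<Sum>a\<in>UNIV. (if a = A1 z then (\<Sum>b\<in>UNIV. if b = A2 z then c a b else 0) else 0))"
      using z by (intro sum.cong refl) (auto simp: indicator_def)
    also have "\<dots> = c (A1 z) (A2 z)" by (simp add: sum.delta sum.delta')
    finally show "c (A1 z) (A2 z) = (\<Sum>a\<in>UNIV. \<Sum>b\<in>UNIV. c a b * indicator {z\<in>space M. A1 z = a \<and> A2 z = b} z)" ..
  qed simp
  also have "\<dots> = (\<Sum>a\<in>UNIV. \<Sum>b\<in>UNIV. c a b * measure M {z\<in>space M. A1 z = a \<and> A2 z = b})"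
  proof -
    have I: "\<And>a b. integrable M (\<lambda>z. c a b * indicator {z\<in>space M. A1 z = a \<and> A2 z = b} z)"
      by (intro integrable_mult_right integrable_real_indicator S) (simp add: less_top[symmetric])
    have "(\<integral>z. (\<Sum>a\<in>UNIV. \<Sum>b\<in>UNIV. c a b * indicator {z\<in>space M. A1 z = a \<and> A2 z = b} z) \<partial>M)
       = (\<Sum>a\<in>UNIV. (\<integral>z. (\<Sum>b\<in>UNIV. c a b * indicator {z\<in>space M. A1 z = a \<and> A2 z = b} z) \<partial>M))"
      by (rule Bochner_Integration.integral_sum) (intro Bochner_Integration.integrable_sum I)
    also have "\<dots> = (\<Sum>a\<in>UNIV. \<Sum>b\<in>UNIV. (\<integral>z. c a b * indicator {z\<in>space M. A1 z = a \<and> A2 z = b} z \<partial>M))"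
      by (intro sum.cong refl Bochner_Integration.integral_sum I)
    also have "\<dots> = (\<Sum>a\<in>UNIV. \<Sum>b\<in>UNIV. c a b * measure M {z\<in>space M. A1 z = a \<and> A2 z = b})"
      by (intro sum.cong refl) (simp add: S less_top[symmetric])
    finally show ?thesis .
  qed
  finally show ?thesis .
qed

lemma abs_le_sum2:
  fixes c :: "'a::finite \<Rightarrow> 'a \<Rightarrow> real"
  shows "\<bar>c x y\<bar> \<le> (\<Sum>a\<in>UNIV. \<Sum>b\<in>UNIV. \<bar>c a b\<bar>)"
proof -
  have "\<bar>c x y\<bar> \<le> (\<Sum>b\<in>UNIV. \<bar>c x b\<bar>)" by (rule member_le_sum) auto
  also have "\<dots> \<le> (\<Sum>a\<in>UNIV. \<Sum>b\<in>UNIV. \<bar>c a b\<bar>)"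
    by (rule member_le_sum[where f="\<lambda>a. \<Sum>b\<in>UNIV. \<bar>c a b\<bar>"]) (auto intro: sum_nonneg)
  finally show ?thesis .
qed

lemma scheme_integral:
  fixes F :: "'w \<times> 'n \<Rightarrow> 'a::finite" and c :: "'a \<Rightarrow> 'a \<Rightarrow> real"
  assumes P: "prob_space P" and Q: "prob_space Q"
    and F[measurable]: "F \<in> measurable (P \<Otimes>\<^sub>M Q) (count_space UNIV)"
  shows "integrable P (\<lambda>w. (\<Sum>a\<in>UNIV. \<Sum>b\<in>UNIV. c a b * (measure Q {n\<in>space Q. F (w, n) = a} * measure Q {n\<in>space Q. F (w, n) = b})))"
  and "(\<integral>(w, n1, n2). c (F (w, n1)) (F (w, n2)) \<partial>(P \<Otimes>\<^sub>M (Q \<Otimes>\<^sub>M Q))) =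
    (\<integral>w. (\<Sum>a\<in>UNIV. \<Sum>b\<in>UNIV. c a b * (measure Q {n\<in>space Q. F (w, n) = a} * measure Q {n\<in>space Q. F (w, n) = b})) \<partial>P)"
proof -
  interpret P: prob_space P by fact
  interpret Q: prob_space Q by fact
  interpret QQ: pair_prob_space Q Q by unfold_locales
  interpret PQQ: pair_prob_space P "Q \<Otimes>\<^sub>M Q" by unfold_locales
  let ?h = "\<lambda>(w, n1, n2). c (F (w, n1)) (F (w, n2))"
  have hm: "?h \<in> borel_measurable (P \<Otimes>\<^sub>M (Q \<Otimes>\<^sub>M Q))" by measurable
  have hi: "integrable (P \<Otimes>\<^sub>M (Q \<Otimes>\<^sub>M Q)) ?h"
    by (rule PQQ.P.integrable_const_bound[where B="\<Sum>a\<in>UNIV. \<Sum>b\<in>UNIV. \<bar>c a b\<bar>"])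
       (auto simp: abs_le_sum2 split: prod.split intro: hm)
  have main: "(\<integral>z. ?h z \<partial>(P \<Otimes>\<^sub>M (Q \<Otimes>\<^sub>M Q))) = (\<integral>w. (\<integral>y. ?h (w, y) \<partial>(Q \<Otimes>\<^sub>M Q)) \<partial>P)"
    using PQQ.integral_fst'[OF hi] by simp
  have pw: "\<And>w. w \<in> space P \<Longrightarrow> (\<integral>y. ?h (w, y) \<partial>(Q \<Otimes>\<^sub>M Q)) = (\<Sum>a\<in>UNIV. \<Sum>b\<in>UNIV. c a b * (measure Q {n\<in>space Q. F (w, n) = a} * measure Q {n\<in>space Q. F (w, n) = b}))"
  proof -
    fix w assume w: "w \<in> space P"
    have Fw[measurable]: "(\<lambda>n. F (w, n)) \<in> measurable Q (count_space UNIV)"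
      using measurable_Pair2[OF F w] .
    have "(\<integral>y. ?h (w, y) \<partial>(Q \<Otimes>\<^sub>M Q)) = (\<integral>y. c (F (w, fst y)) (F (w, snd y)) \<partial>(Q \<Otimes>\<^sub>M Q))"
      by (rule Bochner_Integration.integral_cong) (auto split: prod.split)
    also have "\<dots> = (\<Sum>a\<in>UNIV. \<Sum>b\<in>UNIV. c a b * measure (Q \<Otimes>\<^sub>M Q) {y\<in>space (Q \<Otimes>\<^sub>M Q). F (w, fst y) = a \<and> F (w, snd y) = b})"
      by (rule integral_actions) (auto intro: QQ.P.finite_measure_axioms)
    also have "\<dots> = (\<Sum>a\<in>UNIV. \<Sum>b\<in>UNIV. c a b * (measure Q {n\<in>space Q. F (w, n) = a} * measure Q {n\<in>space Q. F (w, n) = b}))"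
    proof (intro sum.cong refl arg_cong2[where f="(*)"])
      fix a b
      have eq: "{y\<in>space (Q \<Otimes>\<^sub>M Q). F (w, fst y) = a \<and> F (w, snd y) = b}
          = {n\<in>space Q. F (w, n) = a} \<times> {n\<in>space Q. F (w, n) = b}"
        by (auto simp: space_pair_measure)
      have "emeasure (Q \<Otimes>\<^sub>M Q) ({n\<in>space Q. F (w, n) = a} \<times> {n\<in>space Q. F (w, n) = b})
          = emeasure Q {n\<in>space Q. F (w, n) = a} * emeasure Q {n\<in>space Q. F (w, n) = b}"
        by (rule Q.emeasure_pair_measure_Times) measurable
      then show "measure (Q \<Otimes>\<^sub>M Q) {y\<in>space (Q \<Otimes>\<^sub>M Q). F (w, fst y) = a \<and> F (w, snd y) = b}
          = measure Q {n\<in>space Q. F (w, n) = a} * measure Q {n\<in>space Q. F (w, n) = b}"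
        unfolding eq measure_def by (simp add: enn2real_mult)
    qed
    finally show "(\<integral>y. ?h (w, y) \<partial>(Q \<Otimes>\<^sub>M Q)) = (\<Sum>a\<in>UNIV. \<Sum>b\<in>UNIV. c a b * (measure Q {n\<in>space Q. F (w, n) = a} * measure Q {n\<in>space Q. F (w, n) = b}))" .
  qed
  show "integrable P (\<lambda>w. (\<Sum>a\<in>UNIV. \<Sum>b\<in>UNIV. c a b * (measure Q {n\<in>space Q. F (w, n) = a} * measure Q {n\<in>space Q. F (w, n) = b})))"
  proof -
    have "integrable P (\<lambda>w. (\<integral>y. ?h (w, y) \<partial>(Q \<Otimes>\<^sub>M Q)))" using PQQ.integrable_fst'[OF hi] .
    moreover have "integrable P (\<lambda>w. (\<integral>y. ?h (w, y) \<partial>(Q \<Otimes>\<^sub>M Q))) \<longleftrightarrow> integrable P (\<lambda>w. (\<Sum>a\<in>UNIV. \<Sum>b\<in>UNIV. c a b * (measure Q {n\<in>space Q. F (w, n) = a} * measure Q {n\<in>space Q. F (w, n) = b})))"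
      by (rule Bochner_Integration.integrable_cong[OF refl]) (rule pw)
    ultimately show ?thesis by simp
  qed
  show "(\<integral>(w, n1, n2). c (F (w, n1)) (F (w, n2)) \<partial>(P \<Otimes>\<^sub>M (Q \<Otimes>\<^sub>M Q))) =
    (\<integral>w. (\<Sum>a\<in>UNIV. \<Sum>b\<in>UNIV. c a b * (measure Q {n\<in>space Q. F (w, n) = a} * measure Q {n\<in>space Q. F (w, n) = b})) \<partial>P)"
    using main pw by (simp cong: Bochner_Integration.integral_cong)
qed



lemma inner_vec_pairs:
  fixes A M :: "real ^ ('a::finite \<times> 'a)"
  shows "inner A M = (\<Sum>a\<in>UNIV. \<Sum>b\<in>UNIV. A $ (a, b) * M $ (a, b))"
proof -
  have "inner A M = (\<Sum>p\<in>UNIV \<times> UNIV. A $ p * M $ p)" by (simp add: inner_vec_def UNIV_Times_UNIV)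
  also have "\<dots> = (\<Sum>a\<in>UNIV. \<Sum>b\<in>UNIV. A $ (a, b) * M $ (a, b))"
    unfolding sum.cartesian_product by (simp add: case_prod_beta)
  finally show ?thesis .
qed

lemma mixture_finite:
  fixes \<pi> :: "'a::finite \<Rightarrow> 'a \<Rightarrow> real"
  assumes H: "\<And>(c::'a \<Rightarrow> 'a \<Rightarrow> real) \<beta>. (\<And>y. (\<forall>a. 0 \<le> y a) \<Longrightarrow> (\<Sum>a\<in>UNIV. y a) = 1 \<Longrightarrow>
       \<beta> < (\<Sum>a\<in>UNIV. \<Sum>b\<in>UNIV. c a b * (y a * y b))) \<Longrightarrow>
       \<beta> \<le> (\<Sum>a\<in>UNIV. \<Sum>b\<in>UNIV. c a b * \<pi> a b)"
  shows "\<exists>(k::nat) (w::nat \<Rightarrow> real) (x::nat \<Rightarrow> 'a \<Rightarrow> real).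
        (\<forall>i<k. 0 \<le> w i) \<and> (\<Sum>i<k. w i) = 1 \<and>
        (\<forall>i<k. (\<forall>a. 0 \<le> x i a) \<and> (\<Sum>a\<in>UNIV. x i a) = 1) \<and>
        (\<forall>a b. \<pi> a b = (\<Sum>i<k. w i * x i a * x i b))"
proof -
  define \<Delta> where "\<Delta> = {y :: real ^ 'a. (\<forall>a. 0 \<le> y $ a) \<and> (\<Sum>a\<in>UNIV. y $ a) = 1}"
  define \<Phi> :: "real ^ 'a \<Rightarrow> real ^ ('a \<times> 'a)" where "\<Phi> = (\<lambda>y. \<chi> p. y $ fst p * y $ snd p)"
  define C where "C = \<Phi> ` \<Delta>"
  define \<pi>v :: "real ^ ('a \<times> 'a)" where "\<pi>v = (\<chi> p. \<pi> (fst p) (snd p))"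
  have "closed \<Delta>" unfolding \<Delta>_def
    by (intro closed_Collect_conj closed_Collect_all closed_Collect_le closed_Collect_eq continuous_intros)
  moreover have "bounded \<Delta>"
  proof (rule bounded_subset[OF bounded_cbox[of 0 1]])
    show "\<Delta> \<subseteq> cbox 0 1"
    proof
      fix y assume y: "y \<in> \<Delta>"
      have "\<And>a. y $ a \<le> 1"
      proof -
        fix a
        have "y $ a \<le> (\<Sum>a\<in>UNIV. y $ a)" using y unfolding \<Delta>_def by (intro member_le_sum) auto
        then show "y $ a \<le> 1" using y unfolding \<Delta>_def by simp
      qed
      then show "y \<in> cbox 0 1" using y unfolding \<Delta>_def by (auto simp: mem_box_cart)
    qed
  qed
  ultimately have "compact \<Delta>" by (simp add: compact_eq_bounded_closed)
  moreover have "continuous_on \<Delta> \<Phi>" unfolding \<Phi>_def by (intro continuous_intros)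
  ultimately have "compact C" unfolding C_def by (rule compact_continuous_image[rotated])
  then have cl: "closed (convex hull C)" by (intro compact_imp_closed compact_convex_hull)
  have "\<pi>v \<in> convex hull C"
  proof (rule ccontr)
    assume "\<pi>v \<notin> convex hull C"
    from separating_hyperplane_closed_point[OF convex_convex_hull cl this]
    obtain A \<beta> where A: "inner A \<pi>v < \<beta>" "\<forall>x\<in>convex hull C. \<beta> < inner A x" by blast
    have "\<beta> \<le> (\<Sum>a\<in>UNIV. \<Sum>b\<in>UNIV. A $ (a, b) * \<pi> a b)"
    proof (rule H)
      fix y :: "'a \<Rightarrow> real" assume y: "\<forall>a. 0 \<le> y a" "(\<Sum>a\<in>UNIV. y a) = 1"
      have "(\<chi> a. y a) \<in> \<Delta>" using y unfolding \<Delta>_def by simp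
      then have "\<Phi> (\<chi> a. y a) \<in> C" unfolding C_def by (rule imageI)
      then have "\<Phi> (\<chi> a. y a) \<in> convex hull C" using hull_subset by (rule subsetD[rotated])
      then have "\<beta> < inner A (\<Phi> (\<chi> a. y a))" using A by blast
      then show "\<beta> < (\<Sum>a\<in>UNIV. \<Sum>b\<in>UNIV. A $ (a, b) * (y a * y b))"
        by (simp add: inner_vec_pairs \<Phi>_def)
    qed
    moreover have "inner A \<pi>v = (\<Sum>a\<in>UNIV. \<Sum>b\<in>UNIV. A $ (a, b) * \<pi> a b)"
      by (simp add: inner_vec_pairs \<pi>v_def)
    ultimately show False using A by simp
  qed
  then obtain S u where S: "finite S" "S \<subseteq> C" "\<forall>x\<in>S. 0 \<le> u x" "sum u S = 1"
    "(\<Sum>v\<in>S. u v *\<^sub>R v) = \<pi>v"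
    unfolding convex_hull_explicit by blast
  have "\<forall>v\<in>S. \<exists>y. y \<in> \<Delta> \<and> v = \<Phi> y" using S(2) unfolding C_def by blast
  then obtain yv where yv: "\<And>v. v \<in> S \<Longrightarrow> yv v \<in> \<Delta> \<and> v = \<Phi> (yv v)" by metis
  obtain h where h: "bij_betw h {0..<card S} S" using ex_bij_betw_nat_finite[OF S(1)] by blast
  have h': "bij_betw h {..<card S} S" using h by (simp add: lessThan_atLeast0)
  have hS: "\<And>i. i < card S \<Longrightarrow> h i \<in> S" using h' by (auto dest: bij_betwE)
  show ?thesis
  proof (intro exI conjI allI impI)
    show "0 \<le> u (h i)" if "i < card S" for i using S(3) hS[OF that] by blast
    show "(\<Sum>i<card S. u (h i)) = 1" using S(4) sum.reindex_bij_betw[OF h', of u] by simp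
    show "0 \<le> yv (h i) $ a" if "i < card S" for i a
      using yv[OF hS[OF that]] unfolding \<Delta>_def by blast
    show "(\<Sum>a\<in>UNIV. yv (h i) $ a) = 1" if "i < card S" for i
      using yv[OF hS[OF that]] unfolding \<Delta>_def by blast
    fix a b
    have "\<pi> a b = \<pi>v $ (a, b)" by (simp add: \<pi>v_def)
    also have "\<dots> = (\<Sum>v\<in>S. u v * v $ (a, b))" using S(5)[symmetric] by simp
    also have "\<dots> = (\<Sum>v\<in>S. u v * (yv v $ a * yv v $ b))"
    proof (intro sum.cong refl)
      fix v assume "v \<in> S"
      then have "v = \<Phi> (yv v)" using yv by blast
      then have "v $ (a, b) = \<Phi> (yv v) $ (a, b)" by (rule arg_cong)
      also have "\<dots> = yv v $ a * yv v $ b" by (simp add: \<Phi>_def)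
      finally show "u v * v $ (a, b) = u v * (yv v $ a * yv v $ b)" by simp
    qed
    also have "\<dots> = (\<Sum>i<card S. u (h i) * (yv (h i) $ a * yv (h i) $ b))"
      using sum.reindex_bij_betw[OF h', symmetric] by simp
    finally show "\<pi> a b = (\<Sum>i<card S. u (h i) * yv (h i) $ a * yv (h i) $ b)"
      by (simp add: mult.assoc)
  qed
qed


lemma scheme_actions:
  fixes F :: "'w \<times> 'n \<Rightarrow> 'a::finite" and c :: "'a \<Rightarrow> 'a \<Rightarrow> real"
  assumes P: "prob_space P" and Q: "prob_space Q"
    and F[measurable]: "F \<in> measurable (P \<Otimes>\<^sub>M Q) (count_space UNIV)"
  shows "(\<integral>(w, n1, n2). c (F (w, n1)) (F (w, n2)) \<partial>(P \<Otimes>\<^sub>M (Q \<Otimes>\<^sub>M Q))) =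
    (\<Sum>a\<in>UNIV. \<Sum>b\<in>UNIV. c a b * measure (P \<Otimes>\<^sub>M (Q \<Otimes>\<^sub>M Q))
        {(w, n1, n2) \<in> space (P \<Otimes>\<^sub>M (Q \<Otimes>\<^sub>M Q)). F (w, n1) = a \<and> F (w, n2) = b})"
proof -
  interpret P: prob_space P by fact
  interpret Q: prob_space Q by fact
  interpret QQ: pair_prob_space Q Q by unfold_locales
  interpret PQQ: pair_prob_space P "Q \<Otimes>\<^sub>M Q" by unfold_locales
  have m1[measurable]: "(\<lambda>z. F (fst z, fst (snd z))) \<in> measurable (P \<Otimes>\<^sub>M (Q \<Otimes>\<^sub>M Q)) (count_space UNIV)"
    by measurable
  have m2[measurable]: "(\<lambda>z. F (fst z, snd (snd z))) \<in> measurable (P \<Otimes>\<^sub>M (Q \<Otimes>\<^sub>M Q)) (count_space UNIV)"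
    by measurable
  have "(\<integral>(w, n1, n2). c (F (w, n1)) (F (w, n2)) \<partial>(P \<Otimes>\<^sub>M (Q \<Otimes>\<^sub>M Q))) =
     (\<integral>z. c (F (fst z, fst (snd z))) (F (fst z, snd (snd z))) \<partial>(P \<Otimes>\<^sub>M (Q \<Otimes>\<^sub>M Q)))"
    by (rule Bochner_Integration.integral_cong) (auto split: prod.split)
  also have "\<dots> = (\<Sum>a\<in>UNIV. \<Sum>b\<in>UNIV. c a b * measure (P \<Otimes>\<^sub>M (Q \<Otimes>\<^sub>M Q))
        {z\<in>space (P \<Otimes>\<^sub>M (Q \<Otimes>\<^sub>M Q)). F (fst z, fst (snd z)) = a \<and> F (fst z, snd (snd z)) = b})"
    by (rule integral_actions[OF PQQ.P.finite_measure_axioms m1 m2])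
  also have "\<dots> = (\<Sum>a\<in>UNIV. \<Sum>b\<in>UNIV. c a b * measure (P \<Otimes>\<^sub>M (Q \<Otimes>\<^sub>M Q))
        {(w, n1, n2) \<in> space (P \<Otimes>\<^sub>M (Q \<Otimes>\<^sub>M Q)). F (w, n1) = a \<and> F (w, n2) = b})"
    by (intro sum.cong refl arg_cong2[where f="(*)"] arg_cong[where f="measure _"]) auto
  finally show ?thesis .
qed

lemma prob_vec:
  fixes G :: "'n \<Rightarrow> 'a::finite"
  assumes Q: "prob_space Q" and G[measurable]: "G \<in> measurable Q (count_space UNIV)"
  shows "(\<Sum>a\<in>UNIV. measure Q {n\<in>space Q. G n = a}) = 1"
proof -
  interpret Q: prob_space Q by fact
  have "(\<integral>n. (\<lambda>a b. if a = b then 1 else 0 :: real) (G n) (G n) \<partial>Q) =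
    (\<Sum>a\<in>UNIV. \<Sum>b\<in>UNIV. (if a = b then 1 else 0) * measure Q {n\<in>space Q. G n = a \<and> G n = b})"
    by (rule integral_actions[OF Q.finite_measure_axioms G G])
  also have "\<dots> = (\<Sum>a\<in>UNIV. measure Q {n\<in>space Q. G n = a})"
    by (intro sum.cong refl) (simp add: if_distrib[of "\<lambda>x. x * _"] sum.delta cong: if_cong)
  finally show ?thesis using Q.prob_space by simp
qed



lemma scheme_key:
  fixes f :: "'i \<Rightarrow> 'a::finite" and c :: "'a \<Rightarrow> 'a \<Rightarrow> real"
  assumes "fs_scheme P Q S I f"
  shows "(\<integral>(w, n1, n2). c (f (I (w, n1))) (f (I (w, n2))) \<partial>scheme_space P Q) =
    (\<Sum>a\<in>UNIV. \<Sum>b\<in>UNIV. c a b * action_dist P Q I f a b)"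
proof -
  have P: "prob_space P" and Q: "prob_space Q" and I: "I \<in> measurable (P \<Otimes>\<^sub>M Q) S"
    and f: "f \<in> measurable S (count_space UNIV)" using assms unfolding fs_scheme_def by auto
  have F: "(\<lambda>z. f (I z)) \<in> measurable (P \<Otimes>\<^sub>M Q) (count_space UNIV)"
    using measurable_comp[OF I f] by (simp add: comp_def)
  show ?thesis
    unfolding action_dist_def scheme_space_def
    by (rule scheme_actions[OF P Q F])
qed

lemma scheme_mix:
  fixes f :: "'i \<Rightarrow> 'a::finite" and c :: "'a \<Rightarrow> 'a \<Rightarrow> real"
  assumes "fs_scheme P Q S I f"
  shows "(\<Sum>a\<in>UNIV. \<Sum>b\<in>UNIV. c a b * action_dist P Q I f a b) =
    (\<integral>w. (\<Sum>a\<in>UNIV. \<Sum>b\<in>UNIV. c a b * (measure Q {n\<in>space Q. f (I (w, n)) = a} * measure Q {n\<in>space Q. f (I (w, n)) = b})) \<partial>P)"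
proof -
  have P: "prob_space P" and Q: "prob_space Q" and I: "I \<in> measurable (P \<Otimes>\<^sub>M Q) S"
    and f: "f \<in> measurable S (count_space UNIV)" using assms unfolding fs_scheme_def by auto
  have F: "(\<lambda>z. f (I z)) \<in> measurable (P \<Otimes>\<^sub>M Q) (count_space UNIV)"
    using measurable_comp[OF I f] by (simp add: comp_def)
  show ?thesis
    using scheme_key[OF assms, of c] scheme_integral(2)[OF P Q F, of c]
    unfolding scheme_space_def by simp
qed

lemma scheme_mix_int:
  fixes f :: "'i \<Rightarrow> 'a::finite" and c :: "'a \<Rightarrow> 'a \<Rightarrow> real"
  assumes "fs_scheme P Q S I f"
  shows "integrable P (\<lambda>w. (\<Sum>a\<in>UNIV. \<Sum>b\<in>UNIV. c a b * (measure Q {n\<in>space Q. f (I (w, n)) = a} * measure Q {n\<in>space Q. f (I (w, n)) = b})))"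
proof -
  have P: "prob_space P" and Q: "prob_space Q" and I: "I \<in> measurable (P \<Otimes>\<^sub>M Q) S"
    and f: "f \<in> measurable S (count_space UNIV)" using assms unfolding fs_scheme_def by auto
  have F: "(\<lambda>z. f (I z)) \<in> measurable (P \<Otimes>\<^sub>M Q) (count_space UNIV)"
    using measurable_comp[OF I f] by (simp add: comp_def)
  show ?thesis using scheme_integral(1)[OF P Q F, of c] by simp
qed

lemma dev_ineq1:
  fixes u :: "'a::finite \<Rightarrow> 'a \<Rightarrow> real" and \<pi> :: "'a \<Rightarrow> 'a \<Rightarrow> real"
  assumes "(\<Sum>a\<in>UNIV. \<Sum>b\<in>UNIV. u (if a = s then t else a) b * \<pi> a b) \<le> (\<Sum>a\<in>UNIV. \<Sum>b\<in>UNIV. u a b * \<pi> a b)"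
  shows "(\<Sum>b\<in>UNIV. (u t b - u s b) * \<pi> s b) \<le> 0"
proof -
  have "(\<Sum>a\<in>UNIV. \<Sum>b\<in>UNIV. u (if a = s then t else a) b * \<pi> a b) =
     (\<Sum>a\<in>UNIV. (\<Sum>b\<in>UNIV. u a b * \<pi> a b) + (if a = s then (\<Sum>b\<in>UNIV. (u t b - u s b) * \<pi> s b) else 0))"
    by (intro sum.cong refl) (auto simp: sum.distrib[symmetric] algebra_simps)
  also have "\<dots> = (\<Sum>a\<in>UNIV. \<Sum>b\<in>UNIV. u a b * \<pi> a b) + (\<Sum>b\<in>UNIV. (u t b - u s b) * \<pi> s b)"
    by (simp add: sum.distrib)
  finally show ?thesis using assms by simp
qed

lemma dev_ineq2:
  fixes u :: "'a::finite \<Rightarrow> 'a \<Rightarrow> real" and \<pi> :: "'a \<Rightarrow> 'a \<Rightarrow> real"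
  assumes "(\<Sum>a\<in>UNIV. \<Sum>b\<in>UNIV. u a (if b = s then t else b) * \<pi> a b) \<le> (\<Sum>a\<in>UNIV. \<Sum>b\<in>UNIV. u a b * \<pi> a b)"
  shows "(\<Sum>a\<in>UNIV. (u a t - u a s) * \<pi> a s) \<le> 0"
proof -
  have "(\<Sum>a\<in>UNIV. \<Sum>b\<in>UNIV. u a (if b = s then t else b) * \<pi> a b) =
     (\<Sum>a\<in>UNIV. (\<Sum>b\<in>UNIV. u a b * \<pi> a b) + (u a t - u a s) * \<pi> a s)"
  proof (intro sum.cong refl)
    fix a
    have "(\<Sum>b\<in>UNIV. u a (if b = s then t else b) * \<pi> a b) =
       (\<Sum>b\<in>UNIV. u a b * \<pi> a b + (if b = s then (u a t - u a s) * \<pi> a s else 0))"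
      by (intro sum.cong refl) (auto simp: algebra_simps)
    also have "\<dots> = (\<Sum>b\<in>UNIV. u a b * \<pi> a b) + (u a t - u a s) * \<pi> a s"
      by (simp add: sum.distrib)
    finally show "(\<Sum>b\<in>UNIV. u a (if b = s then t else b) * \<pi> a b) = (\<Sum>b\<in>UNIV. u a b * \<pi> a b) + (u a t - u a s) * \<pi> a s" .
  qed
  also have "\<dots> = (\<Sum>a\<in>UNIV. \<Sum>b\<in>UNIV. u a b * \<pi> a b) + (\<Sum>a\<in>UNIV. (u a t - u a s) * \<pi> a s)"
    by (simp add: sum.distrib)
  finally show ?thesis using assms by simp
qed

lemma part1:
  fixes u1 u2 :: "'a::finite \<Rightarrow> 'a \<Rightarrow> real" and f :: "'i \<Rightarrow> 'a"
  assumes CE: "fs_indirect_CE u1 u2 P Q S I f"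
  shows "exchangeable_eq u1 u2 (action_dist P Q I f)"
proof -
  have sch: "fs_scheme P Q S I f" using CE unfolding fs_indirect_CE_def by simp
  have dev: "\<And>g. g \<in> measurable S (count_space UNIV) \<Longrightarrow>
        (\<integral>(w, n1, n2). u1 (g (I (w, n1))) (f (I (w, n2))) \<partial>scheme_space P Q)
          \<le> (\<integral>(w, n1, n2). u1 (f (I (w, n1))) (f (I (w, n2))) \<partial>scheme_space P Q)
      \<and> (\<integral>(w, n1, n2). u2 (f (I (w, n1))) (g (I (w, n2))) \<partial>scheme_space P Q)
          \<le> (\<integral>(w, n1, n2). u2 (f (I (w, n1))) (f (I (w, n2))) \<partial>scheme_space P Q)"
    using CE unfolding fs_indirect_CE_def by blast
  have P: "prob_space P" and Q: "prob_space Q" and I: "I \<in> measurable (P \<Otimes>\<^sub>M Q) S"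
    and f: "f \<in> measurable S (count_space UNIV)" using sch unfolding fs_scheme_def by auto
  interpret P: prob_space P by fact
  interpret Q: prob_space Q by fact
  interpret QQ: pair_prob_space Q Q by unfold_locales
  interpret PQQ: pair_prob_space P "Q \<Otimes>\<^sub>M Q" by unfold_locales
  define \<pi> where "\<pi> = action_dist P Q I f"
  have key: "\<And>c. (\<integral>(w, n1, n2). c (f (I (w, n1))) (f (I (w, n2))) \<partial>scheme_space P Q) =
    (\<Sum>a\<in>UNIV. \<Sum>b\<in>UNIV. c a b * \<pi> a b)"
    unfolding \<pi>_def by (rule scheme_key[OF sch])
  have gm: "\<And>h::'a \<Rightarrow> 'a. (\<lambda>i. h (f i)) \<in> measurable S (count_space UNIV)"
  proof -
    fix h :: "'a \<Rightarrow> 'a"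
    have "h \<in> measurable (count_space UNIV) (count_space UNIV)" by simp
    from measurable_comp[OF f this] show "(\<lambda>i. h (f i)) \<in> measurable S (count_space UNIV)"
      by (simp add: comp_def)
  qed
  have CEq: "correlated_eq u1 u2 \<pi>"
    unfolding correlated_eq_def
  proof (intro conjI allI)
    show "0 \<le> \<pi> a b" for a b unfolding \<pi>_def action_dist_def by simp
    have "(\<Sum>a\<in>UNIV. \<Sum>b\<in>UNIV. (\<lambda>a b. 1::real) a b * \<pi> a b) = (\<integral>(w, n1, n2). (1::real) \<partial>scheme_space P Q)"
      using key[of "\<lambda>a b. 1"] by simp
    also have "\<dots> = (\<integral>z. (1::real) \<partial>scheme_space P Q)"
      by (rule Bochner_Integration.integral_cong) (auto split: prod.split)
    also have "\<dots> = 1" unfolding scheme_space_def using PQQ.P.prob_space by simp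
    finally show "(\<Sum>a\<in>UNIV. \<Sum>b\<in>UNIV. \<pi> a b) = 1" by simp
    fix s t
    have "(\<integral>(w, n1, n2). u1 ((\<lambda>i. if f i = s then t else f i) (I (w, n1))) (f (I (w, n2))) \<partial>scheme_space P Q)
          \<le> (\<integral>(w, n1, n2). u1 (f (I (w, n1))) (f (I (w, n2))) \<partial>scheme_space P Q)"
      using dev[OF gm[of "\<lambda>a. if a = s then t else a"]] by simp
    then have "(\<Sum>a\<in>UNIV. \<Sum>b\<in>UNIV. u1 (if a = s then t else a) b * \<pi> a b) \<le> (\<Sum>a\<in>UNIV. \<Sum>b\<in>UNIV. u1 a b * \<pi> a b)"
      using key[of "\<lambda>a b. u1 (if a = s then t else a) b"] key[of u1] by simp
    then show "(\<Sum>s2\<in>UNIV. (u1 t s2 - u1 s s2) * \<pi> s s2) \<le> 0" by (rule dev_ineq1)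
    have "(\<integral>(w, n1, n2). u2 (f (I (w, n1))) ((\<lambda>i. if f i = s then t else f i) (I (w, n2))) \<partial>scheme_space P Q)
          \<le> (\<integral>(w, n1, n2). u2 (f (I (w, n1))) (f (I (w, n2))) \<partial>scheme_space P Q)"
      using dev[OF gm[of "\<lambda>a. if a = s then t else a"]] by simp
    then have "(\<Sum>a\<in>UNIV. \<Sum>b\<in>UNIV. u2 a (if b = s then t else b) * \<pi> a b) \<le> (\<Sum>a\<in>UNIV. \<Sum>b\<in>UNIV. u2 a b * \<pi> a b)"
      using key[of "\<lambda>a b. u2 a (if b = s then t else b)"] key[of u2] by simp
    then show "(\<Sum>s1\<in>UNIV. (u2 s1 t - u2 s1 s) * \<pi> s1 s) \<le> 0" by (rule dev_ineq2)
  qed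
  have mix: "\<exists>(k::nat) (w::nat \<Rightarrow> real) (x::nat \<Rightarrow> 'a \<Rightarrow> real).
        (\<forall>i<k. 0 \<le> w i) \<and> (\<Sum>i<k. w i) = 1 \<and>
        (\<forall>i<k. (\<forall>a. 0 \<le> x i a) \<and> (\<Sum>a\<in>UNIV. x i a) = 1) \<and>
        (\<forall>a b. \<pi> a b = (\<Sum>i<k. w i * x i a * x i b))"
  proof (rule mixture_finite)
    fix c :: "'a \<Rightarrow> 'a \<Rightarrow> real" and \<beta> :: real
    assume H: "\<And>y. (\<forall>a. 0 \<le> y a) \<Longrightarrow> (\<Sum>a\<in>UNIV. y a) = 1 \<Longrightarrow>
       \<beta> < (\<Sum>a\<in>UNIV. \<Sum>b\<in>UNIV. c a b * (y a * y b))"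
    let ?x = "\<lambda>w a. measure Q {n\<in>space Q. f (I (w, n)) = a}"
    have "(\<integral>w. \<beta> \<partial>P) \<le> (\<integral>w. (\<Sum>a\<in>UNIV. \<Sum>b\<in>UNIV. c a b * (?x w a * ?x w b)) \<partial>P)"
    proof (rule integral_mono)
      show "integrable P (\<lambda>w. \<beta>)" by simp
      show "integrable P (\<lambda>w. (\<Sum>a\<in>UNIV. \<Sum>b\<in>UNIV. c a b * (?x w a * ?x w b)))"
        by (rule scheme_mix_int[OF sch])
      fix w assume w: "w \<in> space P"
      have Fw: "(\<lambda>n. f (I (w, n))) \<in> measurable Q (count_space UNIV)"
        using measurable_Pair2[OF measurable_comp[OF I f] w] by (simp add: comp_def)
      show "\<beta> \<le> (\<Sum>a\<in>UNIV. \<Sum>b\<in>UNIV. c a b * (?x w a * ?x w b))"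
        using H[of "?x w"] prob_vec[OF Q Fw] by (simp add: less_imp_le)
    qed
    also have "\<dots> = (\<Sum>a\<in>UNIV. \<Sum>b\<in>UNIV. c a b * \<pi> a b)"
      unfolding \<pi>_def by (rule scheme_mix[OF sch, symmetric])
    finally show "\<beta> \<le> (\<Sum>a\<in>UNIV. \<Sum>b\<in>UNIV. c a b * \<pi> a b)" using P.prob_space by simp
  qed
  show ?thesis using CEq mix unfolding exchangeable_eq_def \<pi>_def by blast
qed



lemma embed_fin:
  fixes g :: "'b \<Rightarrow> real"
  assumes A: "finite A" and nn: "\<And>x. 0 \<le> g x" and z: "\<And>x. x \<notin> A \<Longrightarrow> g x = 0" and s: "sum g A = 1"
  shows "pmf (embed_pmf g) x = g x"
proof -
  have "(\<integral>\<^sup>+x. ennreal (g x) \<partial>count_space UNIV) = (\<Sum>x\<in>A. ennreal (g x))"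
    by (rule nn_integral_count_space') (use A z in auto)
  also have "\<dots> = ennreal (sum g A)" by (rule sum_ennreal) (use nn in auto)
  also have "\<dots> = 1" using s by simp
  finally show ?thesis by (rule pmf_embed_pmf[OF nn])
qed

lemma sum_delta2:
  fixes M :: "'a::finite \<Rightarrow> 'a \<Rightarrow> real"
  shows "(\<Sum>a'\<in>UNIV. \<Sum>b'\<in>UNIV. (if a' = a \<and> b' = b then 1 else 0) * M a' b') = M a b"
proof -
  have e: "\<And>a' b'. (if a' = a \<and> b' = b then 1 else 0) * M a' b' = (if a' = a then (if b' = b then M a' b' else 0) else 0)"
    by simp
  have g: "\<And>a'. (\<Sum>b'\<in>UNIV. (if a' = a then (if b' = b then M a' b' else 0) else 0)) = (if a' = a then M a b else 0)"
    by (case_tac "a' = a") simp_all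
  show ?thesis by (simp only: e g) simp
qed

lemma dev_sum1:
  fixes u :: "'a::finite \<Rightarrow> 'a \<Rightarrow> real"
  assumes "\<forall>s t. (\<Sum>b\<in>UNIV. (u t b - u s b) * \<pi> s b) \<le> 0"
  shows "(\<Sum>a\<in>UNIV. \<Sum>b\<in>UNIV. u (h a) b * \<pi> a b) \<le> (\<Sum>a\<in>UNIV. \<Sum>b\<in>UNIV. u a b * \<pi> a b)"
proof (rule sum_mono)
  fix a
  have "(\<Sum>b\<in>UNIV. u (h a) b * \<pi> a b) - (\<Sum>b\<in>UNIV. u a b * \<pi> a b) = (\<Sum>b\<in>UNIV. (u (h a) b - u a b) * \<pi> a b)"
    by (simp add: sum_subtractf[symmetric] left_diff_distrib)
  then show "(\<Sum>b\<in>UNIV. u (h a) b * \<pi> a b) \<le> (\<Sum>b\<in>UNIV. u a b * \<pi> a b)" using assms[rule_format, where s=a and t="h a"] by linarith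
qed

lemma dev_sum2:
  fixes u :: "'a::finite \<Rightarrow> 'a \<Rightarrow> real"
  assumes "\<forall>s t. (\<Sum>a\<in>UNIV. (u a t - u a s) * \<pi> a s) \<le> 0"
  shows "(\<Sum>a\<in>UNIV. \<Sum>b\<in>UNIV. u a (h b) * \<pi> a b) \<le> (\<Sum>a\<in>UNIV. \<Sum>b\<in>UNIV. u a b * \<pi> a b)"
proof -
  have "(\<Sum>a\<in>UNIV. \<Sum>b\<in>UNIV. u a (h b) * \<pi> a b) = (\<Sum>b\<in>UNIV. \<Sum>a\<in>UNIV. u a (h b) * \<pi> a b)"
    by (rule sum.swap)
  also have "\<dots> \<le> (\<Sum>b\<in>UNIV. \<Sum>a\<in>UNIV. u a b * \<pi> a b)"
  proof (rule sum_mono)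
    fix b
    have "(\<Sum>a\<in>UNIV. u a (h b) * \<pi> a b) - (\<Sum>a\<in>UNIV. u a b * \<pi> a b) = (\<Sum>a\<in>UNIV. (u a (h b) - u a b) * \<pi> a b)"
      by (simp add: sum_subtractf[symmetric] left_diff_distrib)
    then show "(\<Sum>a\<in>UNIV. u a (h b) * \<pi> a b) \<le> (\<Sum>a\<in>UNIV. u a b * \<pi> a b)" using assms[rule_format, where s=b and t="h b"] by linarith
  qed
  also have "\<dots> = (\<Sum>a\<in>UNIV. \<Sum>b\<in>UNIV. u a b * \<pi> a b)" by (rule sum.swap)
  finally show ?thesis .
qed



lemma part2:
  fixes u1 u2 :: "'a::finite \<Rightarrow> 'a \<Rightarrow> real"
  assumes EX: "exchangeable_eq u1 u2 \<pi>"
  shows "\<exists>(P::nat measure) (Q::real measure) (S::(nat \<times> real) measure) I f.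
               fs_indirect_CE u1 u2 P Q S I f \<and> action_dist P Q I f = \<pi>"
proof -
  have CE: "correlated_eq u1 u2 \<pi>" using EX unfolding exchangeable_eq_def by blast
  obtain k :: nat and w :: "nat \<Rightarrow> real" and x :: "nat \<Rightarrow> 'a \<Rightarrow> real" where
    w0: "\<forall>i<k. 0 \<le> w i" and w1: "(\<Sum>i<k. w i) = 1" and
    x01: "\<forall>i<k. (\<forall>a. 0 \<le> x i a) \<and> (\<Sum>a\<in>UNIV. x i a) = 1" and
    \<pi>x: "\<forall>a b. \<pi> a b = (\<Sum>i<k. w i * x i a * x i b)"
    using EX unfolding exchangeable_eq_def by blast
  define wk where "wk = (\<lambda>i. if i < k then w i else 0)"
  define p where "p = embed_pmf wk"
  have pmf_p: "pmf p i = wk i" for i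
    unfolding p_def
    by (rule embed_fin[where A="{..<k}"]) (use w0 w1 in \<open>auto simp: wk_def\<close>)
  define X where "X = (\<lambda>i. embed_pmf (x i))"
  have pmf_X: "i < k \<Longrightarrow> pmf (X i) a = x i a" for i a
    unfolding X_def by (rule embed_fin[where A=UNIV]) (use x01 in auto)
  define PP where "PP = Pi_pmf {..<k} undefined X"
  define enc :: "(nat \<Rightarrow> 'a) \<Rightarrow> real" where "enc = (\<lambda>h. real (to_nat (map h [0..<k])))"
  define dec :: "real \<Rightarrow> nat \<Rightarrow> 'a" where "dec = (\<lambda>r j. (from_nat (nat \<lfloor>r\<rfloor>) :: 'a list) ! j)"
  have dec_enc: "j < k \<Longrightarrow> dec (enc h) j = h j" for h j
    by (simp add: dec_def enc_def)
  define qq where "qq = map_pmf enc PP"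
  define I :: "nat \<times> real \<Rightarrow> nat \<times> real" where "I = (\<lambda>(j, r). (to_nat (dec r j), 0))"
  define f :: "nat \<times> real \<Rightarrow> 'a" where "f = (\<lambda>(m, r). from_nat m)"
  have fI: "f (I (j, r)) = dec r j" for j r by (simp add: f_def I_def)
  have xq: "j < k \<Longrightarrow> measure (measure_pmf qq) {n \<in> space (measure_pmf qq). f (I (j, n)) = a} = x j a" for j a
  proof -
    assume j: "j < k"
    have "measure (measure_pmf qq) {n \<in> space (measure_pmf qq). f (I (j, n)) = a}
        = measure (measure_pmf PP) (enc -` {n. dec n j = a})"
      by (simp add: qq_def fI)
    also have "enc -` {n. dec n j = a} = (\<lambda>h. h j) -` {a}" using dec_enc[OF j] by auto
    also have "measure (measure_pmf PP) ((\<lambda>h. h j) -` {a}) = measure (measure_pmf (map_pmf (\<lambda>h. h j) PP)) {a}"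
      by simp
    also have "map_pmf (\<lambda>h. h j) PP = X j" unfolding PP_def using j by (simp add: Pi_pmf_component)
    also have "measure (measure_pmf (X j)) {a} = x j a" using pmf_X[OF j] by (simp add: measure_pmf_single)
    finally show ?thesis .
  qed
  have xq': "j < k \<Longrightarrow> measure (measure_pmf qq) {n. f (I (j, n)) = a} = x j a" for j a
    using xq[of j a] by simp
  have sch: "fs_scheme (measure_pmf p) (measure_pmf qq) (count_space UNIV) I f"
    unfolding fs_scheme_def
  proof (intro conjI prob_space_measure_pmf)
    have "I \<in> measurable (count_space UNIV \<Otimes>\<^sub>M measure_pmf qq) (count_space UNIV)"
      by (rule measurable_pair_measure_countable1) auto
    show "I \<in> measurable (measure_pmf p \<Otimes>\<^sub>M measure_pmf qq) (count_space UNIV)"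
    proof -
      have "sets (count_space UNIV \<Otimes>\<^sub>M measure_pmf qq) = sets (measure_pmf p \<Otimes>\<^sub>M measure_pmf qq)"
        by (rule sets_pair_measure_cong) auto
      then have "measurable (count_space UNIV \<Otimes>\<^sub>M measure_pmf qq) (count_space UNIV :: (nat \<times> real) measure)
          = measurable (measure_pmf p \<Otimes>\<^sub>M measure_pmf qq) (count_space UNIV)"
        by (rule measurable_cong_sets) simp
      then show ?thesis using \<open>I \<in> _\<close> by simp
    qed
    show "f \<in> measurable (count_space UNIV) (count_space UNIV)" by simp
  qed
  have AD: "action_dist (measure_pmf p) (measure_pmf qq) I f = \<pi>"
  proof (intro ext)
    fix a b
    have "action_dist (measure_pmf p) (measure_pmf qq) I f a b =
      (\<Sum>a'\<in>UNIV. \<Sum>b'\<in>UNIV. (if a' = a \<and> b' = b then 1 else 0) * action_dist (measure_pmf p) (measure_pmf qq) I f a' b')"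
      by (rule sum_delta2[symmetric])
    also have "\<dots> = (\<integral>j. (\<Sum>a'\<in>UNIV. \<Sum>b'\<in>UNIV. (if a' = a \<and> b' = b then 1 else 0) *
         (measure (measure_pmf qq) {n\<in>space (measure_pmf qq). f (I (j, n)) = a'} *
          measure (measure_pmf qq) {n\<in>space (measure_pmf qq). f (I (j, n)) = b'})) \<partial>measure_pmf p)"
      by (rule scheme_mix[OF sch])
    also have "\<dots> = (\<integral>j. measure (measure_pmf qq) {n\<in>space (measure_pmf qq). f (I (j, n)) = a} *
          measure (measure_pmf qq) {n\<in>space (measure_pmf qq). f (I (j, n)) = b} \<partial>measure_pmf p)"
      by (simp only: sum_delta2)
    also have "\<dots> = (\<Sum>j<k. pmf p j *\<^sub>R (measure (measure_pmf qq) {n\<in>space (measure_pmf qq). f (I (j, n)) = a} *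
          measure (measure_pmf qq) {n\<in>space (measure_pmf qq). f (I (j, n)) = b}))"
      by (rule integral_measure_pmf) (auto simp: set_pmf_iff pmf_p wk_def split: if_splits)
    also have "\<dots> = (\<Sum>j<k. w j * x j a * x j b)"
      by (intro sum.cong refl) (simp add: xq' pmf_p wk_def)
    also have "\<dots> = \<pi> a b" using \<pi>x by simp
    finally show "action_dist (measure_pmf p) (measure_pmf qq) I f a b = \<pi> a b" .
  qed
  have key: "\<And>c. (\<integral>(w, n1, n2). c (f (I (w, n1))) (f (I (w, n2))) \<partial>scheme_space (measure_pmf p) (measure_pmf qq)) =
    (\<Sum>a\<in>UNIV. \<Sum>b\<in>UNIV. c a b * \<pi> a b)"
    using scheme_key[OF sch] AD by simp
  have gI: "g (I z) = g (to_nat (f (I z)), 0)" for g :: "nat \<times> real \<Rightarrow> 'a" and z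
    by (cases z) (simp add: I_def f_def)
  have CE1: "\<forall>s t. (\<Sum>b\<in>UNIV. (u1 t b - u1 s b) * \<pi> s b) \<le> 0"
    and CE2: "\<forall>s t. (\<Sum>a\<in>UNIV. (u2 a t - u2 a s) * \<pi> a s) \<le> 0"
    using CE unfolding correlated_eq_def by auto
  have "fs_indirect_CE u1 u2 (measure_pmf p) (measure_pmf qq) (count_space UNIV) I f"
    unfolding fs_indirect_CE_def
  proof (intro conjI sch ballI)
    fix g :: "nat \<times> real \<Rightarrow> 'a"
    show "(\<integral>(w, n1, n2). u1 (g (I (w, n1))) (f (I (w, n2))) \<partial>scheme_space (measure_pmf p) (measure_pmf qq))
          \<le> (\<integral>(w, n1, n2). u1 (f (I (w, n1))) (f (I (w, n2))) \<partial>scheme_space (measure_pmf p) (measure_pmf qq))"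
      using key[of "\<lambda>a b. u1 (g (to_nat a, 0)) b"] key[of u1]
        dev_sum1[OF CE1, of "\<lambda>a. g (to_nat a, 0)"]
      by (simp add: gI[of g])
    show "(\<integral>(w, n1, n2). u2 (f (I (w, n1))) (g (I (w, n2))) \<partial>scheme_space (measure_pmf p) (measure_pmf qq))
          \<le> (\<integral>(w, n1, n2). u2 (f (I (w, n1))) (f (I (w, n2))) \<partial>scheme_space (measure_pmf p) (measure_pmf qq))"
      using key[of "\<lambda>a b. u2 a (g (to_nat b, 0))"] key[of u2]
        dev_sum2[OF CE2, of "\<lambda>a. g (to_nat a, 0)"]
      by (simp add: gI[of g])
  qed
  then show ?thesis using AD by blast
qed


theorem proposition4p6:
  fixes u1 u2 :: "'a::finite \<Rightarrow> 'a \<Rightarrow> real"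
  assumes "symmetric_game u1 u2"
  shows "(\<forall>(P::'w measure) (Q::'n measure) (S::'i measure) I f.
            fs_indirect_CE u1 u2 P Q S I f \<longrightarrow> exchangeable_eq u1 u2 (action_dist P Q I f))
       \<and> (\<forall>\<pi>. exchangeable_eq u1 u2 \<pi> \<longrightarrow>
            (\<exists>(P::nat measure) (Q::real measure) (S::(nat \<times> real) measure) I f.
               fs_indirect_CE u1 u2 P Q S I f \<and> action_dist P Q I f = \<pi>))"
  using part1 part2 by blast

end
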